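(* Let $n\ge2$ and let $g_1,\dots,g_r\in\mathbb R[X_1,\dots,X_n]$ satisfy $1-\|\mathbf X\|_2^2\in\mathcal Q(\mathbf g)$ and $\|g_i\|\le\tfrac12$ for all $i$. Let $\mathfrak c\ge1,\textit{Ł}\ge1$ satisfy $D(x)^{\textit{Ł}}\le\mathfrak c\,G(x)$ on $[-1,1]^n$, and let $\gamma(n,\mathbf g)\ge1$ be a constant depending only on $n,\mathbf g$ such that every $h\in\mathbb R[\mathbf X]$ with $\min_S h>0$ lies in $\mathcal Q_\ell(\mathbf g)$ whenever $\ell\ge\gamma(n,\mathbf g)\,d(h)^{3.5n\textit{Ł}}\epsilon(h)^{-2.5n\textit{Ł}}$. Let $f\in\mathbb R[\mathbf X]$ with $f\ge0$ on $S$ and $f^*=\min_S f$. Then for every $0<\epsilon\le\|f\|$ we have $f-f^*+\epsilon\in\mathcal Q_\ell(\mathbf g)$ whenever $$\ell\ge\gamma'(n,\mathbf g)\,d(f)^{3.5n\textit{Ł}}\,\|f\|^{2.5n\textit{Ł}}\,\epsilon^{-2.5n\textit{Ł}},\qquad \gamma'(n,\mathbf g)=3^{2.5n\textit{Ł}}\gamma(n,\mathbf g).$$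
   Context: $\Sigma^2$ sums of squares; $S=\{x:g_i(x)\ge0\ \forall i\}$ (nonempty); $\mathcal Q(\mathbf g)=\Sigma^2+\sum_i\Sigma^2g_i$; $\mathcal Q_\ell(\mathbf g)=\{s_0+\sum_is_ig_i: s_j\in\Sigma^2,\deg s_0\le\ell,\deg(s_ig_i)\le\ell\}$; $\|h\|=\max_{[-1,1]^n}|h|$; $\|\mathbf X\|_2^2=\sum X_i^2$; $d(h)=\deg h$; $\epsilon(h)=\min_S h/\|h\|$; $G(x)=|\min\{g_1(x),\dots,g_r(x),0\}|$, $D(x)=\operatorname{dist}(x,S)$. *)

theory Defs
  imports "HOL-Analysis.Analysis" "HOL-Library.Poly_Mapping"
begin

text \<open>Real multivariate polynomials: a polynomial is a finitely supported map
from monomials (exponent vectors nat =>0 nat, variable i standing for X_(i+1))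
to real coefficients.\<close>

type_synonym mpoly = "(nat \<Rightarrow>\<^sub>0 nat) \<Rightarrow>\<^sub>0 real"

definition poly_in :: "nat \<Rightarrow> mpoly \<Rightarrow> bool" where
  "poly_in n p \<longleftrightarrow> (\<forall>m\<in>Poly_Mapping.keys p. Poly_Mapping.keys m \<subseteq> {..<n})"

definition mconst :: "real \<Rightarrow> mpoly" where
  "mconst c = Poly_Mapping.single 0 c"

definition mvar :: "nat \<Rightarrow> mpoly" where
  "mvar i = Poly_Mapping.single (Poly_Mapping.single i 1) 1"

definition meval :: "mpoly \<Rightarrow> (nat \<Rightarrow> real) \<Rightarrow> real" where
  "meval p x = (\<Sum>m\<in>Poly_Mapping.keys p. Poly_Mapping.lookup p m * (\<Prod>i\<in>Poly_Mapping.keys m. x i ^ Poly_Mapping.lookup m i))"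

definition mdeg :: "mpoly \<Rightarrow> nat" where
  "mdeg p = Max (insert 0 ((\<lambda>m. \<Sum>i\<in>Poly_Mapping.keys m. Poly_Mapping.lookup m i) ` Poly_Mapping.keys p))"

definition Rn :: "nat \<Rightarrow> (nat \<Rightarrow> real) set" where
  "Rn n = {x. \<forall>i\<ge>n. x i = 0}"

definition cube :: "nat \<Rightarrow> (nat \<Rightarrow> real) set" where
  "cube n = {x \<in> Rn n. \<forall>i<n. \<bar>x i\<bar> \<le> 1}"

definition mnorm :: "nat \<Rightarrow> mpoly \<Rightarrow> real" where
  "mnorm n h = (SUP x\<in>cube n. \<bar>meval h x\<bar>)"

definition sos :: "nat \<Rightarrow> mpoly \<Rightarrow> bool" where
  "sos n p \<longleftrightarrow> (\<exists>qs. (\<forall>q\<in>set qs. poly_in n q) \<and> p = (\<Sum>q\<leftarrow>qs. q * q))"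

definition qmod :: "nat \<Rightarrow> nat \<Rightarrow> (nat \<Rightarrow> mpoly) \<Rightarrow> mpoly set" where
  "qmod n r g = {p. \<exists>s0 s. sos n s0 \<and> (\<forall>i<r. sos n (s i)) \<and>
                       p = s0 + (\<Sum>i<r. s i * g i)}"

definition qmod_trunc :: "nat \<Rightarrow> nat \<Rightarrow> (nat \<Rightarrow> mpoly) \<Rightarrow> nat \<Rightarrow> mpoly set" where
  "qmod_trunc n r g l = {p. \<exists>s0 s. sos n s0 \<and> (\<forall>i<r. sos n (s i)) \<and>
                       mdeg s0 \<le> l \<and> (\<forall>i<r. mdeg (s i * g i) \<le> l) \<and>
                       p = s0 + (\<Sum>i<r. s i * g i)}"

definition semialg :: "nat \<Rightarrow> nat \<Rightarrow> (nat \<Rightarrow> mpoly) \<Rightarrow> (nat \<Rightarrow> real) set" where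
  "semialg n r g = {x \<in> Rn n. \<forall>i<r. meval (g i) x \<ge> 0}"

definition minS :: "nat \<Rightarrow> nat \<Rightarrow> (nat \<Rightarrow> mpoly) \<Rightarrow> mpoly \<Rightarrow> real" where
  "minS n r g h = (INF x\<in>semialg n r g. meval h x)"

definition eps_rel :: "nat \<Rightarrow> nat \<Rightarrow> (nat \<Rightarrow> mpoly) \<Rightarrow> mpoly \<Rightarrow> real" where
  "eps_rel n r g h = minS n r g h / mnorm n h"

definition Gfun :: "nat \<Rightarrow> (nat \<Rightarrow> mpoly) \<Rightarrow> (nat \<Rightarrow> real) \<Rightarrow> real" where
  "Gfun r g x = \<bar>Min (insert 0 ((\<lambda>i. meval (g i) x) ` {..<r}))\<bar>"

definition Dfun :: "nat \<Rightarrow> nat \<Rightarrow> (nat \<Rightarrow> mpoly) \<Rightarrow> (nat \<Rightarrow> real) \<Rightarrow> real" where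
  "Dfun n r g x = (INF y\<in>semialg n r g. sqrt (\<Sum>i<n. (x i - y i)^2))"

end

theory Submission
  imports Defs
begin

definition mon :: "(nat \<Rightarrow> real) \<Rightarrow> (nat \<Rightarrow>\<^sub>0 nat) \<Rightarrow> real" where
  "mon x m = (\<Prod>i\<in>Poly_Mapping.keys m. x i ^ Poly_Mapping.lookup m i)"

lemma mon_superset:
  assumes "finite A" "Poly_Mapping.keys m \<subseteq> A"
  shows "mon x m = (\<Prod>i\<in>A. x i ^ Poly_Mapping.lookup m i)"
  unfolding mon_def
  by (rule prod.mono_neutral_left) (use assms in \<open>auto simp: in_keys_iff\<close>)

lemma mon_add: "mon x (k + l) = mon x k * mon x l"
proof -
  let ?A = "Poly_Mapping.keys k \<union> Poly_Mapping.keys l"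
  have "mon x (k + l) = (\<Prod>i\<in>?A. x i ^ Poly_Mapping.lookup (k+l) i)"
    by (rule mon_superset) (auto dest: keys_add[THEN subsetD])
  also have "\<dots> = (\<Prod>i\<in>?A. x i ^ Poly_Mapping.lookup k i * x i ^ Poly_Mapping.lookup l i)"
    by (simp add: lookup_add power_add)
  also have "\<dots> = mon x k * mon x l"
    by (simp add: prod.distrib mon_superset[of ?A])
  finally show ?thesis .
qed

lemma mon_zero[simp]: "mon x 0 = 1" by (simp add: mon_def)

lemma meval_mon: "meval p x = (\<Sum>m\<in>Poly_Mapping.keys p. Poly_Mapping.lookup p m * mon x m)"
  by (simp add: meval_def mon_def)

lemma meval_superset:
  assumes "finite A" "Poly_Mapping.keys p \<subseteq> A"
  shows "meval p x = (\<Sum>m\<in>A. Poly_Mapping.lookup p m * mon x m)"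
  unfolding meval_mon
  by (rule sum.mono_neutral_left) (use assms in \<open>auto simp: in_keys_iff\<close>)

lemma meval_add: "meval (p + q) x = meval p x + meval q x"
proof -
  let ?A = "Poly_Mapping.keys p \<union> Poly_Mapping.keys q"
  have "meval (p + q) x = (\<Sum>m\<in>?A. Poly_Mapping.lookup (p+q) m * mon x m)"
    by (rule meval_superset) (auto dest: keys_add[THEN subsetD])
  also have "\<dots> = meval p x + meval q x"
    by (simp add: lookup_add distrib_right sum.distrib meval_superset[of ?A])
  finally show ?thesis .
qed

lemma meval_uminus: "meval (- p) x = - meval p x"
  by (simp add: meval_mon lookup_uminus sum_negf)

lemma meval_diff: "meval (p - q) x = meval p x - meval q x"
  using meval_add[of p "-q" x] by (simp add: meval_uminus)

lemma meval_zero[simp]: "meval 0 x = 0" by (simp add: meval_def)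

lemma meval_single: "meval (Poly_Mapping.single k a) x = a * mon x k"
  by (simp add: meval_mon)

lemma meval_sum: "meval (\<Sum>i\<in>I. p i) x = (\<Sum>i\<in>I. meval (p i) x)"
  by (induction I rule: infinite_finite_induct) (auto simp: meval_add)

lemma pm_decomp: "p = (\<Sum>m\<in>Poly_Mapping.keys p. Poly_Mapping.single m (Poly_Mapping.lookup p m))"
proof (rule poly_mapping_eqI)
  fix k
  have "Poly_Mapping.lookup (\<Sum>m\<in>Poly_Mapping.keys p. Poly_Mapping.single m (Poly_Mapping.lookup p m)) k
     = (\<Sum>m\<in>Poly_Mapping.keys p. (Poly_Mapping.lookup p m when m = k))"
    by (simp add: lookup_sum lookup_single)
  also have "\<dots> = Poly_Mapping.lookup p k"
    by (cases "k \<in> Poly_Mapping.keys p") (auto simp: when_def in_keys_iff)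
  finally show "Poly_Mapping.lookup p k = Poly_Mapping.lookup (\<Sum>m\<in>Poly_Mapping.keys p. Poly_Mapping.single m (Poly_Mapping.lookup p m)) k" by simp
qed

lemma meval_mult: "meval (p * q) x = meval p x * meval q x"
proof -
  let ?P = "Poly_Mapping.keys p" and ?Q = "Poly_Mapping.keys q"
  have "p * q = (\<Sum>m\<in>?P. Poly_Mapping.single m (Poly_Mapping.lookup p m)) *
                (\<Sum>m'\<in>?Q. Poly_Mapping.single m' (Poly_Mapping.lookup q m'))"
    using pm_decomp[of p] pm_decomp[of q] by simp
  also have "\<dots> = (\<Sum>m\<in>?P. \<Sum>m'\<in>?Q. Poly_Mapping.single m (Poly_Mapping.lookup p m) * Poly_Mapping.single m' (Poly_Mapping.lookup q m'))"
    by (simp add: sum_distrib_left sum_distrib_right sum.swap[of _ ?Q ?P])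
  finally have "meval (p*q) x = (\<Sum>m\<in>?P. \<Sum>m'\<in>?Q. (Poly_Mapping.lookup p m * mon x m) * (Poly_Mapping.lookup q m' * mon x m'))"
    by (simp add: meval_sum mult_single meval_single mon_add mult_ac)
  also have "\<dots> = meval p x * meval q x"
    by (simp add: meval_mon sum_product)
  finally show ?thesis .
qed

lemma meval_mconst[simp]: "meval (mconst c) x = c"
  by (simp add: mconst_def meval_single)

lemma meval_mvar[simp]: "meval (mvar i) x = x i"
  by (simp add: mvar_def meval_single mon_def)

lemma meval_sos: "sos n p \<Longrightarrow> meval p x \<ge> 0"
proof -
  assume "sos n p"
  then obtain qs where p: "p = (\<Sum>q\<leftarrow>qs. q * q)" unfolding sos_def by blast
  have "meval (\<Sum>q\<leftarrow>qs. q * q) x \<ge> 0"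
    by (induction qs) (auto simp: meval_add meval_mult)
  then show ?thesis using p by simp
qed

lemma meval_qmod:
  assumes "p \<in> qmod n r g" "x \<in> semialg n r g"
  shows "meval p x \<ge> 0"
proof -
  obtain s0 s where s: "sos n s0" "\<forall>i<r. sos n (s i)" "p = s0 + (\<Sum>i<r. s i * g i)"
    using assms(1) unfolding qmod_def by blast
  have "\<forall>i<r. meval (s i * g i) x \<ge> 0"
    using s(2) assms(2) meval_sos by (auto simp: meval_mult semialg_def intro!: mult_nonneg_nonneg)
  then have "(\<Sum>i<r. meval (s i * g i) x) \<ge> 0" by (auto intro: sum_nonneg)
  then show ?thesis using s(3) meval_sos[OF s(1)] by (simp add: meval_add meval_sum)
qed

lemma S_sub_cube:
  assumes "mconst 1 - (\<Sum>i<n. mvar i * mvar i) \<in> qmod n r g"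
  shows "semialg n r g \<subseteq> cube n"
proof
  fix x assume x: "x \<in> semialg n r g"
  have "meval (mconst 1 - (\<Sum>i<n. mvar i * mvar i)) x \<ge> 0" by (rule meval_qmod[OF assms x])
  then have le: "(\<Sum>i<n. x i * x i) \<le> 1" by (simp add: meval_diff meval_sum meval_mult)
  have "\<bar>x i\<bar> \<le> 1" if "i < n" for i
  proof -
    have "x i * x i \<le> (\<Sum>i<n. x i * x i)"
      by (rule member_le_sum) (use that in auto)
    then have "x i * x i \<le> 1" using le by linarith
    then show ?thesis by (metis abs_le_square_iff abs_mult_self_eq power2_eq_square abs_one one_power2)
  qed
  then show "x \<in> cube n" using x by (auto simp: cube_def semialg_def)
qed

lemma meval_bound:
  assumes "x \<in> cube n"
  shows "\<bar>meval p x\<bar> \<le> (\<Sum>m\<in>Poly_Mapping.keys p. \<bar>Poly_Mapping.lookup p m\<bar>)"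
proof -
  have xi: "\<bar>x i\<bar> \<le> 1" for i
    using assms by (cases "i < n") (auto simp: cube_def Rn_def)
  have mon: "\<bar>mon x m\<bar> \<le> 1" for m
    unfolding mon_def abs_prod by (rule prod_le_1) (auto simp: power_abs xi intro: power_le_one)
  have "\<bar>meval p x\<bar> \<le> (\<Sum>m\<in>Poly_Mapping.keys p. \<bar>Poly_Mapping.lookup p m * mon x m\<bar>)"
    unfolding meval_mon by (rule sum_abs)
  also have "\<dots> \<le> (\<Sum>m\<in>Poly_Mapping.keys p. \<bar>Poly_Mapping.lookup p m\<bar>)"
    by (rule sum_mono) (auto simp: abs_mult intro: mult_left_le[OF mon])
  finally show ?thesis .
qed

lemma cube_ne: "(\<lambda>_. 0) \<in> cube n" by (simp add: cube_def Rn_def)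

lemma mnorm_upper: "x \<in> cube n \<Longrightarrow> \<bar>meval p x\<bar> \<le> mnorm n p"
  unfolding mnorm_def
  by (rule cSUP_upper) (auto intro!: bdd_aboveI2 meval_bound)

lemma mnorm_least: "(\<And>x. x \<in> cube n \<Longrightarrow> \<bar>meval p x\<bar> \<le> B) \<Longrightarrow> mnorm n p \<le> B"
  unfolding mnorm_def using cube_ne
  by (intro cSUP_least) auto

lemma keys_h: "Poly_Mapping.keys (f - mconst a + mconst b) \<subseteq> Poly_Mapping.keys f \<union> {0}"
  using keys_add[of "f - mconst a" "mconst b"] keys_diff[of f "mconst a"]
  by (auto simp: mconst_def split: if_splits)

lemma mdeg_h: "mdeg (f - mconst a + mconst b) \<le> mdeg f"
proof -
  let ?d = "\<lambda>m::nat\<Rightarrow>\<^sub>0nat. \<Sum>i\<in>Poly_Mapping.keys m. Poly_Mapping.lookup m i"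
  have fin: "finite (insert 0 (?d ` Poly_Mapping.keys f))" by simp
  show ?thesis unfolding mdeg_def
  proof (subst Max_le_iff, simp, simp, intro ballI)
    fix y assume "y \<in> insert 0 (?d ` Poly_Mapping.keys (f - mconst a + mconst b))"
    then have "y = 0 \<or> y \<in> insert 0 (?d ` Poly_Mapping.keys f)" using keys_h[of f a b] by auto
    then show "y \<le> Max (insert 0 (?d ` Poly_Mapping.keys f))"
      using Max_ge[OF fin] by auto
  qed
qed

lemma poly_in_h: "poly_in n f \<Longrightarrow> poly_in n (f - mconst a + mconst b)"
  unfolding poly_in_def
proof
  fix m assume "\<forall>m\<in>Poly_Mapping.keys f. Poly_Mapping.keys m \<subseteq> {..<n}"
    "m \<in> Poly_Mapping.keys (f - mconst a + mconst b)"
  then show "Poly_Mapping.keys m \<subseteq> {..<n}" using keys_h[of f a b] by (cases "m = 0") auto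
qed

theorem mainTheorem4:
  fixes n r :: nat and g :: "nat \<Rightarrow> mpoly" and c L \<gamma> :: real and f :: mpoly
  assumes n2: "n \<ge> 2"
    and g_in: "\<forall>i<r. poly_in n (g i)"
    and S_ne: "semialg n r g \<noteq> {}"
    and archim: "mconst 1 - (\<Sum>i<n. mvar i * mvar i) \<in> qmod n r g"
    and g_small: "\<forall>i<r. mnorm n (g i) \<le> 1/2"
    and c1: "c \<ge> 1" and L1: "L \<ge> 1"
    and loj: "\<forall>x\<in>cube n. Dfun n r g x powr L \<le> c * Gfun r g x"
    and gamma1: "\<gamma> \<ge> 1"
    and putinar: "\<forall>h l. poly_in n h \<and> minS n r g h > 0 \<and>
         real l \<ge> \<gamma> * real (mdeg h) powr (3.5 * n * L) * eps_rel n r g h powr (- 2.5 * n * L)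
         \<longrightarrow> h \<in> qmod_trunc n r g l"
    and f_in: "poly_in n f"
    and f_nonneg: "\<forall>x\<in>semialg n r g. meval f x \<ge> 0"
  shows "\<forall>\<epsilon> l. 0 < \<epsilon> \<and> \<epsilon> \<le> mnorm n f \<and>
         real l \<ge> (3 powr (2.5 * n * L) * \<gamma>) * real (mdeg f) powr (3.5 * n * L)
                    * mnorm n f powr (2.5 * n * L) * \<epsilon> powr (- 2.5 * n * L)
         \<longrightarrow> f - mconst (minS n r g f) + mconst \<epsilon> \<in> qmod_trunc n r g l"
proof (intro allI impI)
  fix \<epsilon> :: real and l :: nat
  assume H: "0 < \<epsilon> \<and> \<epsilon> \<le> mnorm n f \<and>
         real l \<ge> (3 powr (2.5 * n * L) * \<gamma>) * real (mdeg f) powr (3.5 * n * L)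
                    * mnorm n f powr (2.5 * n * L) * \<epsilon> powr (- 2.5 * n * L)"
  define S where "S = semialg n r g"
  define fs where "fs = minS n r g f"
  define F where "F = mnorm n f"
  define h where "h = f - mconst fs + mconst \<epsilon>"
  define a :: real where "a = 2.5 * n * L"
  define b :: real where "b = 3.5 * n * L"
  have a0: "a > 0" using n2 L1 by (simp add: a_def)
  have b0: "b > 0" using n2 L1 by (simp add: b_def)
  have ep: "0 < \<epsilon>" "\<epsilon> \<le> F" using H by (auto simp: F_def)
  have Scube: "S \<subseteq> cube n" using S_sub_cube[OF archim] by (simp add: S_def)
  have Sne: "S \<noteq> {}" using S_ne by (simp add: S_def)
  obtain x0 where x0: "x0 \<in> S" using Sne by blast
  have fnn: "\<And>x. x \<in> S \<Longrightarrow> meval f x \<ge> 0" using f_nonneg by (simp add: S_def)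
  have bddf: "bdd_below ((\<lambda>x. meval f x) ` S)" using fnn by (intro bdd_belowI2[where m=0]) auto
  have fs_le: "\<And>x. x \<in> S \<Longrightarrow> fs \<le> meval f x"
    unfolding fs_def minS_def S_def[symmetric] by (rule cINF_lower[OF bddf])
  have fs0: "fs \<ge> 0" unfolding fs_def minS_def S_def[symmetric]
    using Sne fnn by (intro cINF_greatest) auto
  have fsF: "fs \<le> F"
    using fs_le[OF x0] mnorm_upper[of x0 n f] Scube x0 by (auto simp: F_def)
  have hx: "meval h x = meval f x - fs + \<epsilon>" for x
    by (simp add: h_def meval_add meval_diff)
  have hS: "\<And>x. x \<in> S \<Longrightarrow> \<epsilon> \<le> meval h x" using fs_le hx by force
  have minh: "minS n r g h \<ge> \<epsilon>" unfolding minS_def S_def[symmetric]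
    using Sne hS by (intro cINF_greatest) auto
  have hpos: "minS n r g h > 0" using minh ep by linarith
  have nh_pos: "mnorm n h > 0"
    using hS[OF x0] mnorm_upper[of x0 n h] Scube x0 ep by force
  have nh_le: "mnorm n h \<le> 3 * F"
  proof (rule mnorm_least)
    fix x assume "x \<in> cube n"
    then have "\<bar>meval f x\<bar> \<le> F" by (simp add: F_def mnorm_upper)
    then show "\<bar>meval h x\<bar> \<le> 3 * F" using hx[of x] fs0 fsF ep by linarith
  qed
  have F0: "F > 0" using ep by linarith
  have er: "eps_rel n r g h \<ge> \<epsilon> / (3 * F)"
  proof -
    have "\<epsilon> / (3 * F) \<le> \<epsilon> / mnorm n h"
      using nh_pos nh_le ep by (intro divide_left_mono) auto
    also have "\<dots> \<le> minS n r g h / mnorm n h"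
      using nh_pos minh by (intro divide_right_mono) auto
    finally show ?thesis by (simp add: eps_rel_def)
  qed
  have e1: "eps_rel n r g h powr (- a) \<le> (\<epsilon> / (3 * F)) powr (- a)"
    by (rule powr_mono2') (use a0 ep F0 er in auto)
  have e2: "(\<epsilon> / (3 * F)) powr (- a) = 3 powr a * F powr a * \<epsilon> powr (- a)"
    using ep F0 by (simp add: powr_minus_divide powr_divide powr_mult divide_simps)
  have d1: "real (mdeg h) powr b \<le> real (mdeg f) powr b"
    using mdeg_h[of f fs \<epsilon>] b0 by (intro powr_mono2) (auto simp: h_def)
  have "\<gamma> * real (mdeg h) powr b * eps_rel n r g h powr (- a)
      \<le> \<gamma> * real (mdeg f) powr b * (3 powr a * F powr a * \<epsilon> powr (- a))"
    using gamma1 d1 e1 e2 by (intro mult_mono) auto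
  also have "\<dots> \<le> real l" using H
    by (simp add: a_def b_def F_def mult_ac)
  finally have lb: "real l \<ge> \<gamma> * real (mdeg h) powr (3.5 * n * L) * eps_rel n r g h powr (- 2.5 * n * L)"
    by (simp add: a_def b_def)
  have "h \<in> qmod_trunc n r g l"
    using putinar poly_in_h[OF f_in] hpos lb by (auto simp: h_def)
  then show "f - mconst (minS n r g f) + mconst \<epsilon> \<in> qmod_trunc n r g l"
    by (simp add: h_def fs_def)
qed

end
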